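(* Fix integers $Q_1,Q_2\ge0$. Consider a single realization of the demand stream: a Poisson process of type-1 arrivals (rate $\lambda_1$) and an independent Poisson process of type-2 arrivals (rate $\lambda_2$), each type-$i$ arrival carrying an independent mark equal to $1$ with probability $p_{ij}$ ($j\ne i$) and $0$ otherwise. Run four inventory systems driven by this same stream, with initial stocks $(Q_1+1,Q_2+1)$, $(Q_1+1,Q_2)$, $(Q_1,Q_2+1)$, $(Q_1,Q_2)$, and denote their stock of product $i$ at time $t$ by $n_i^{(Q_1+1,Q_2+1)}(t)$, $n_i^{(Q_1+1,Q_2)}(t)$, $n_i^{(Q_1,Q_2+1)}(t)$, $n_i^{(Q_1,Q_2)}(t)$ respectively. Then for every $t\ge0$ and $i=1,2$, on every sample path, $$n_i^{(Q_1+1,Q_2+1)}(t)-n_i^{(Q_1+1,Q_2)}(t)\ \ge\ n_i^{(Q_1,Q_2+1)}(t)-n_i^{(Q_1,Q_2)}(t).$$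
   Context: Dynamics of one inventory system driven by the arrival stream: at a type-$i$ arrival (with $j\ne i$ the other product), if the stock of product $i$ is positive it decreases by one; otherwise, if the stock of product $j$ is positive and the arrival's mark is $1$, the stock of $j$ decreases by one; otherwise nothing changes. There is no replenishment. Under this construction each system's stock process is the inventory CTMC with rates $\lambda_1,\lambda_2$ in the interior, $\lambda_1+\lambda_2p_{21}$ on $\{(i_1,0)\}$, $\lambda_2+\lambda_1p_{12}$ on $\{(0,i_2)\}$, and $(0,0)$ absorbing. *)

theory Defs
  imports Complex_Main
begin

datatype product = P1 | P2

fun other :: "product \<Rightarrow> product" where
  "other P1 = P2" | "other P2 = P1"

type_synonym stock = "product \<Rightarrow> nat"

text \<open>An arrival event: its product type and its substitution mark (True = mark 1).\<close>
type_synonym event = "product \<times> bool"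

definition init_stock :: "nat \<Rightarrow> nat \<Rightarrow> stock" where
  "init_stock q1 q2 = (\<lambda>i. case i of P1 \<Rightarrow> q1 | P2 \<Rightarrow> q2)"

definition step :: "event \<Rightarrow> stock \<Rightarrow> stock" where
  "step e s = (let i = fst e; j = other i in
     if s i > 0 then s(i := s i - 1)
     else if s j > 0 \<and> snd e then s(j := s j - 1)
     else s)"

definition num_arrivals :: "(nat \<Rightarrow> real) \<Rightarrow> real \<Rightarrow> nat" where
  "num_arrivals Tarr t = card {k. Tarr k \<le> t}"

definition stock_at :: "stock \<Rightarrow> (nat \<Rightarrow> real) \<Rightarrow> (nat \<Rightarrow> event) \<Rightarrow> real \<Rightarrow> stock" where
  "stock_at q Tarr ev t = foldl (\<lambda>s k. step (ev k) s) q [0..<num_arrivals Tarr t]"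

end

theory Submission
  imports Defs
begin

definition inv4 :: "stock \<Rightarrow> stock \<Rightarrow> stock \<Rightarrow> stock \<Rightarrow> bool" where
  "inv4 a b c d = (
    (a P1 = d P1 \<and> a P2 = d P2 \<and> b P1 = d P1 \<and> b P2 = d P2 \<and> c P1 = d P1 \<and> c P2 = d P2 \<and> d P1 = 0 \<and> d P2 = 0) \<or>
    (a P1 = d P1 \<and> a P2 = d P2 + 1 \<and> b P1 = d P1 \<and> b P2 = d P2 \<and> c P1 = d P1 \<and> c P2 = d P2 \<and> d P1 = 0 \<and> d P2 = 0) \<or>
    (a P1 = d P1 \<and> a P2 = d P2 + 1 \<and> b P1 = d P1 \<and> b P2 = d P2 \<and> c P1 = d P1 \<and> c P2 = d P2 + 1 \<and> d P1 = 0) \<or>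
    (a P1 = d P1 \<and> a P2 = d P2 + 2 \<and> b P1 = d P1 \<and> b P2 = d P2 + 1 \<and> c P1 = d P1 \<and> c P2 = d P2 + 1 \<and> d P1 = 0) \<or>
    (a P1 = d P1 + 1 \<and> a P2 = d P2 \<and> b P1 = d P1 \<and> b P2 = d P2 \<and> c P1 = d P1 \<and> c P2 = d P2 \<and> d P1 = 0 \<and> d P2 = 0) \<or>
    (a P1 = d P1 + 1 \<and> a P2 = d P2 \<and> b P1 = d P1 + 1 \<and> b P2 = d P2 \<and> c P1 = d P1 \<and> c P2 = d P2 \<and> d P2 = 0) \<or>
    (a P1 = d P1 + 1 \<and> a P2 = d P2 + 1 \<and> b P1 = d P1 + 1 \<and> b P2 = d P2 \<and> c P1 = d P1 \<and> c P2 = d P2 + 1) \<or>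
    (a P1 = d P1 + 2 \<and> a P2 = d P2 \<and> b P1 = d P1 + 1 \<and> b P2 = d P2 \<and> c P1 = d P1 + 1 \<and> c P2 = d P2 \<and> d P2 = 0))"

lemma step_val:
  "step (p, m) s x = (if s p > 0 then (if x = p then s p - 1 else s x)
     else if s (other p) > 0 \<and> m then (if x = other p then s x - 1 else s x) else s x)"
  by (simp add: step_def Let_def)

lemma step_P:
  "step (P1, m) s P1 = (if s P1 > 0 then s P1 - 1 else s P1)"
  "step (P1, m) s P2 = (if s P1 > 0 then s P2 else if s P2 > 0 \<and> m then s P2 - 1 else s P2)"
  "step (P2, m) s P2 = (if s P2 > 0 then s P2 - 1 else s P2)"
  "step (P2, m) s P1 = (if s P2 > 0 then s P1 else if s P1 > 0 \<and> m then s P1 - 1 else s P1)"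
  by (simp_all add: step_val)

lemma inv_step1: "inv4 a b c d \<Longrightarrow> inv4 (step (P1, m) a) (step (P1, m) b) (step (P1, m) c) (step (P1, m) d)"
  unfolding inv4_def step_P by (elim disjE; cases m; cases "d P1"; cases "d P2"; simp)

lemma inv_step2: "inv4 a b c d \<Longrightarrow> inv4 (step (P2, m) a) (step (P2, m) b) (step (P2, m) c) (step (P2, m) d)"
  unfolding inv4_def step_P by (elim disjE; cases m; cases "d P1"; cases "d P2"; simp)

lemma inv_step: "inv4 a b c d \<Longrightarrow> inv4 (step e a) (step e b) (step e c) (step e d)"
  by (cases e; cases "fst e") (auto intro: inv_step1 inv_step2)

lemma inv_foldl: "inv4 a b c d \<Longrightarrow>
  inv4 (foldl (\<lambda>s k. step (ev k) s) a xs) (foldl (\<lambda>s k. step (ev k) s) b xs)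
       (foldl (\<lambda>s k. step (ev k) s) c xs) (foldl (\<lambda>s k. step (ev k) s) d xs)"
  by (induction xs arbitrary: a b c d) (simp_all add: inv_step)

lemma inv_concl: "inv4 a b c d \<Longrightarrow> int (a i) - int (b i) \<ge> int (c i) - int (d i)"
  by (cases i) (auto simp: inv4_def)

theorem mainTheorem4:
  fixes Q1 Q2 :: nat and Tarr :: "nat \<Rightarrow> real" and ev :: "nat \<Rightarrow> event"
    and t :: real and i :: product
  assumes "strict_mono Tarr" and "Tarr 0 > 0"
    and "filterlim Tarr at_top sequentially"
    and "t \<ge> 0"
  shows "int (stock_at (init_stock (Q1+1) (Q2+1)) Tarr ev t i) - int (stock_at (init_stock (Q1+1) Q2) Tarr ev t i)
         \<ge> int (stock_at (init_stock Q1 (Q2+1)) Tarr ev t i) - int (stock_at (init_stock Q1 Q2) Tarr ev t i)"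
proof -
  have "inv4 (init_stock (Q1+1) (Q2+1)) (init_stock (Q1+1) Q2) (init_stock Q1 (Q2+1)) (init_stock Q1 Q2)"
    by (simp add: inv4_def init_stock_def)
  then show ?thesis unfolding stock_at_def by (intro inv_concl inv_foldl)
qed

end
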